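(* Let $p\in[0,1]^n$ and $k\in\mathbb N$, and let $\bar X_1,\dots,\bar X_k\in\{0,1\}^n$ be independent random vectors, each having independent entries with $\Pr((\bar X_l)_i=1)=p_i$. Let $f$ be the objective function of the binary integer program below and $x^*\in\{0,1\}^n$ an optimizer of it, fix $\delta>0$, let $\mu:=\mathbb E_{x\sim p}[\|x-x^*\|_1]$ (where $x\sim p$ means $x$ has independent Bernoulli$(p_i)$ entries), and let $L_f$ be the Lipschitz constant of $f$ with respect to the $1$-norm. If $\mu\le\delta/L_f$, then \[\psi(p,k):=\Pr\big(\exists\,l\in[k]:\ f(\bar X_l)\le f(x^* )+\delta\big)\ge1-\exp\!\left(k\left(\frac{\delta}{L_f}\Big(1-\log\frac{\delta}{\mu L_f}\Big)-\mu\right)\right).\]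
   Context: The binary integer program is $\min_{x\in\{0,1\}^n} f(x):=\langle x,Qx\rangle+\langle c,x\rangle$ subject to $Ax\ge b$ and $Bx=d$, with $Q\in\mathbb R^{n\times n}$, $c\in\mathbb R^n$, $A\in\mathbb R^{m_1\times n}$, $b\in\mathbb R^{m_1}$, $B\in\mathbb R^{m_2\times n}$, $d\in\mathbb R^{m_2}$. $[k]=\{1,\dots,k\}$. *)

theory Defs
  imports "HOL-Probability.Probability"
begin

text \<open>Binary vectors in {0,1}^n are represented as functions nat => bool;
  only the coordinates 0..n-1 (i.e. i < n) are relevant.\<close>

definition bvec :: "(nat \<Rightarrow> bool) \<Rightarrow> nat \<Rightarrow> real" where
  "bvec x i = (if x i then 1 else 0)"

definition bip_obj :: "nat \<Rightarrow> (nat \<Rightarrow> nat \<Rightarrow> real) \<Rightarrow> (nat \<Rightarrow> real) \<Rightarrow> (nat \<Rightarrow> bool) \<Rightarrow> real" where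
  "bip_obj n Q c x = (\<Sum>i<n. bvec x i * (\<Sum>j<n. Q i j * bvec x j)) + (\<Sum>i<n. c i * bvec x i)"

definition bip_feasible :: "nat \<Rightarrow> nat \<Rightarrow> (nat \<Rightarrow> nat \<Rightarrow> real) \<Rightarrow> (nat \<Rightarrow> real)
    \<Rightarrow> nat \<Rightarrow> (nat \<Rightarrow> nat \<Rightarrow> real) \<Rightarrow> (nat \<Rightarrow> real) \<Rightarrow> (nat \<Rightarrow> bool) \<Rightarrow> bool" where
  "bip_feasible n m1 A b m2 B d x \<longleftrightarrow>
     (\<forall>r<m1. (\<Sum>j<n. A r j * bvec x j) \<ge> b r) \<and> (\<forall>r<m2. (\<Sum>j<n. B r j * bvec x j) = d r)"

definition bip_optimizer :: "nat \<Rightarrow> (nat \<Rightarrow> nat \<Rightarrow> real) \<Rightarrow> (nat \<Rightarrow> real) \<Rightarrow> nat \<Rightarrow> (nat \<Rightarrow> nat \<Rightarrow> real) \<Rightarrow> (nat \<Rightarrow> real)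
    \<Rightarrow> nat \<Rightarrow> (nat \<Rightarrow> nat \<Rightarrow> real) \<Rightarrow> (nat \<Rightarrow> real) \<Rightarrow> (nat \<Rightarrow> bool) \<Rightarrow> bool" where
  "bip_optimizer n Q c m1 A b m2 B d xs \<longleftrightarrow>
     bip_feasible n m1 A b m2 B d xs \<and>
     (\<forall>x. bip_feasible n m1 A b m2 B d x \<longrightarrow> bip_obj n Q c xs \<le> bip_obj n Q c x)"

definition dist1 :: "nat \<Rightarrow> (nat \<Rightarrow> bool) \<Rightarrow> (nat \<Rightarrow> bool) \<Rightarrow> real" where
  "dist1 n x y = (\<Sum>i<n. \<bar>bvec x i - bvec y i\<bar>)"

definition lipschitz1 :: "nat \<Rightarrow> ((nat \<Rightarrow> bool) \<Rightarrow> real) \<Rightarrow> real \<Rightarrow> bool" where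
  "lipschitz1 n f L \<longleftrightarrow> (\<forall>x y. \<bar>f x - f y\<bar> \<le> L * dist1 n x y)"

definition bern_vec :: "nat \<Rightarrow> (nat \<Rightarrow> real) \<Rightarrow> (nat \<Rightarrow> bool) pmf" where
  "bern_vec n p = Pi_pmf {..<n} False (\<lambda>i. bernoulli_pmf (p i))"

definition bern_samples :: "nat \<Rightarrow> nat \<Rightarrow> (nat \<Rightarrow> real) \<Rightarrow> (nat \<Rightarrow> nat \<Rightarrow> bool) pmf" where
  "bern_samples k n p = Pi_pmf {..<k} (\<lambda>_. False) (\<lambda>_. bern_vec n p)"

end

theory Submission
  imports Defs
begin

lemma fin_bern: "finite (set_pmf (bern_vec n p))"
  unfolding bern_vec_def by (auto simp: set_Pi_pmf intro: finite_PiE_dflt)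

lemma fin_samples: "finite (set_pmf (bern_samples k n p))"
  unfolding bern_samples_def by (auto simp: set_Pi_pmf intro: fin_bern)

lemma bern_expect:
  assumes "0 \<le> a" "a \<le> 1"
  shows "measure_pmf.expectation (bernoulli_pmf a) h = a * h True + (1 - a) * h False"
  using assms by (subst integral_measure_pmf_real[where A=UNIV]) (auto simp: UNIV_bool)

lemma comp_expect:
  fixes h :: "bool \<Rightarrow> real"
  assumes "i < n"
  shows "measure_pmf.expectation (bern_vec n p) (\<lambda>x. h (x i))
       = measure_pmf.expectation (bernoulli_pmf (p i)) h"
proof -
  have "measure_pmf.expectation (bern_vec n p) (\<lambda>x. h (x i))
      = measure_pmf.expectation (map_pmf (\<lambda>f. f i) (bern_vec n p)) h"
    using integral_map_pmf[of "\<lambda>f. f i" "bern_vec n p" h] by simp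
  also have "map_pmf (\<lambda>f. f i) (bern_vec n p) = bernoulli_pmf (p i)"
    unfolding bern_vec_def using assms by (subst Pi_pmf_component) auto
  finally show ?thesis .
qed

definition gi :: "(nat \<Rightarrow> bool) \<Rightarrow> nat \<Rightarrow> bool \<Rightarrow> real" where
  "gi xs i b = (if b = xs i then 0 else 1)"

definition qi :: "(nat \<Rightarrow> real) \<Rightarrow> (nat \<Rightarrow> bool) \<Rightarrow> nat \<Rightarrow> real" where
  "qi p xs i = (if xs i then 1 - p i else p i)"

lemma gq1: "xs i \<Longrightarrow> gi xs i True = 0 \<and> gi xs i False = 1 \<and> qi p xs i = 1 - p i"
  by (simp add: gi_def qi_def)
lemma gq2: "\<not> xs i \<Longrightarrow> gi xs i True = 1 \<and> gi xs i False = 0 \<and> qi p xs i = p i"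
  by (simp add: gi_def qi_def)
lemma gq_arith: "p i * exp (s * gi xs i True) + (1 - p i) * exp (s * gi xs i False) = 1 + qi p xs i * (exp s - 1)"
  by (cases "xs i") (simp_all add: gq1 gq2 algebra_simps)

lemma dist1_gi: "dist1 n x xs = (\<Sum>i<n. gi xs i (x i))"
  unfolding dist1_def gi_def bvec_def by (intro sum.cong) auto

lemma mu_sum:
  assumes p01: "\<forall>i<n. 0 \<le> p i \<and> p i \<le> 1"
  shows "measure_pmf.expectation (bern_vec n p) (\<lambda>x. dist1 n x xs) = (\<Sum>i<n. qi p xs i)"
proof -
  have "measure_pmf.expectation (bern_vec n p) (\<lambda>x. dist1 n x xs)
      = (\<Sum>i<n. measure_pmf.expectation (bern_vec n p) (\<lambda>x. gi xs i (x i)))"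
    unfolding dist1_gi
    by (rule Bochner_Integration.integral_sum) (auto intro: integrable_measure_pmf_finite fin_bern)
  also have "\<dots> = (\<Sum>i<n. qi p xs i)"
  proof (intro sum.cong refl)
    fix i assume "i \<in> {..<n}"
    then have i: "i < n" by simp
    have "measure_pmf.expectation (bern_vec n p) (\<lambda>x. gi xs i (x i))
        = measure_pmf.expectation (bernoulli_pmf (p i)) (gi xs i)"
      by (rule comp_expect[OF i])
    also have "\<dots> = qi p xs i"
      using p01 i by (simp add: bern_expect gi_def qi_def)
    finally show "measure_pmf.expectation (bern_vec n p) (\<lambda>x. gi xs i (x i)) = qi p xs i" .
  qed
  finally show ?thesis .
qed

lemma mgf_bound:
  assumes p01: "\<forall>i<n. 0 \<le> p i \<and> p i \<le> 1"
  shows "measure_pmf.expectation (bern_vec n p) (\<lambda>x. exp (s * dist1 n x xs))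
     \<le> exp ((exp s - 1) * (\<Sum>i<n. qi p xs i))"
proof -
  have e: "\<And>x. exp (s * dist1 n x xs) = (\<Prod>i\<in>{..<n}. exp (s * gi xs i (x i)))"
    unfolding dist1_gi sum_distrib_left by (rule exp_sum) simp
  have "measure_pmf.expectation (bern_vec n p) (\<lambda>x. exp (s * dist1 n x xs))
      = measure_pmf.expectation (Pi_pmf {..<n} False (\<lambda>i. bernoulli_pmf (p i)))
          (\<lambda>x. \<Prod>i\<in>{..<n}. (\<lambda>i b. exp (s * gi xs i b)) i (x i))"
    unfolding e bern_vec_def by simp
  also have "\<dots> = (\<Prod>i\<in>{..<n}. measure_pmf.expectation (bernoulli_pmf (p i)) (\<lambda>b. exp (s * gi xs i b)))"
    by (rule expectation_prod_Pi_pmf) (auto intro: integrable_measure_pmf_finite)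
  also have "\<dots> = (\<Prod>i\<in>{..<n}. 1 + qi p xs i * (exp s - 1))"
  proof (intro prod.cong refl)
    fix i assume "i \<in> {..<n}"
    then show "measure_pmf.expectation (bernoulli_pmf (p i)) (\<lambda>b. exp (s * gi xs i b)) = 1 + qi p xs i * (exp s - 1)"
    proof -
      have i: "i < n" using \<open>i \<in> {..<n}\<close> by simp
      have "measure_pmf.expectation (bernoulli_pmf (p i)) (\<lambda>b. exp (s * gi xs i b))
          = p i * exp (s * gi xs i True) + (1 - p i) * exp (s * gi xs i False)"
        using p01 i by (intro bern_expect) auto
      also have "\<dots> = 1 + qi p xs i * (exp s - 1)"
        by (rule gq_arith)
      finally show ?thesis .
    qed
  qed
  also have "\<dots> \<le> (\<Prod>i\<in>{..<n}. exp (qi p xs i * (exp s - 1)))"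
  proof (intro prod_mono conjI)
    fix i assume i: "i \<in> {..<n}"
    have q: "0 \<le> qi p xs i" "qi p xs i \<le> 1" using p01 i by (auto simp: qi_def)
    have "0 < exp s" by simp
    have "qi p xs i * (exp s - 1) \<ge> - qi p xs i" using q \<open>0 < exp s\<close>
      using mult_left_mono[of "-1" "exp s - 1" "qi p xs i"] by simp
    then show "0 \<le> 1 + qi p xs i * (exp s - 1)" using q by linarith
    show "1 + qi p xs i * (exp s - 1) \<le> exp (qi p xs i * (exp s - 1))"
      by (rule exp_ge_add_one_self)
  qed
  also have "\<dots> = exp ((exp s - 1) * (\<Sum>i<n. qi p xs i))"
  proof -
    have "(exp s - 1) * (\<Sum>i<n. qi p xs i) = (\<Sum>i<n. qi p xs i * (exp s - 1))"
      by (simp add: sum_distrib_left mult.commute)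
    then show ?thesis by (simp add: exp_sum)
  qed
  finally show ?thesis .
qed

lemma markov_pmf:
  fixes u :: "'a \<Rightarrow> real"
  assumes "finite (set_pmf M)" "\<And>x. 0 \<le> u x" "0 < c"
  shows "measure_pmf.prob M {x. u x \<ge> c} \<le> measure_pmf.expectation M u / c"
proof -
  have "measure (measure_pmf M) {x \<in> space (measure_pmf M). u x \<ge> c} \<le> measure_pmf.expectation M u / c"
    by (rule integral_Markov_inequality_measure[where A=UNIV])
       (use assms in \<open>auto intro: integrable_measure_pmf_finite\<close>)
  then show ?thesis by simp
qed

lemma chernoff:
  assumes p01: "\<forall>i<n. 0 \<le> p i \<and> p i \<le> 1"
    and mu: "\<mu> = measure_pmf.expectation (bern_vec n p) (\<lambda>x. dist1 n x xs)"
    and mupos: "0 < \<mu>" and tge: "\<mu> \<le> t"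
  shows "measure_pmf.prob (bern_vec n p) {x. dist1 n x xs \<ge> t} \<le> exp (t * (1 - ln (t / \<mu>)) - \<mu>)"
proof -
  define s where "s = ln (t / \<mu>)"
  have tpos: "0 < t" using mupos tge by linarith
  have tm: "1 \<le> t / \<mu>" using mupos tge by simp
  have s0: "0 \<le> s" unfolding s_def using tm by simp
  have es: "exp s = t / \<mu>" unfolding s_def using tpos mupos by simp
  have sub: "{x. dist1 n x xs \<ge> t} \<subseteq> {x. exp (s * dist1 n x xs) \<ge> exp (s * t)}"
    using s0 by (auto intro: mult_left_mono)
  have "measure_pmf.prob (bern_vec n p) {x. dist1 n x xs \<ge> t}
      \<le> measure_pmf.prob (bern_vec n p) {x. exp (s * dist1 n x xs) \<ge> exp (s * t)}"
    by (rule measure_pmf.finite_measure_mono[OF sub]) simp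
  also have "\<dots> \<le> measure_pmf.expectation (bern_vec n p) (\<lambda>x. exp (s * dist1 n x xs)) / exp (s * t)"
    by (rule markov_pmf) (auto intro: fin_bern)
  also have "\<dots> \<le> exp ((exp s - 1) * \<mu>) / exp (s * t)"
    using mgf_bound[OF p01, of s xs] mu_sum[OF p01, of xs] mu
    by (intro divide_right_mono) auto
  also have "\<dots> = exp ((exp s - 1) * \<mu> - s * t)"
    by (simp add: exp_diff)
  also have "(exp s - 1) * \<mu> - s * t = t * (1 - ln (t / \<mu>)) - \<mu>"
    unfolding es using mupos by (simp add: s_def field_simps)
  finally show ?thesis .
qed

theorem mainTheorem6:
  fixes n k m1 m2 :: nat
    and p :: "nat \<Rightarrow> real"
    and Q A B :: "nat \<Rightarrow> nat \<Rightarrow> real"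
    and c b d :: "nat \<Rightarrow> real"
    and xs :: "nat \<Rightarrow> bool"
    and \<delta> L \<mu> :: real
  assumes p01: "\<forall>i<n. 0 \<le> p i \<and> p i \<le> 1"
    and opt: "bip_optimizer n Q c m1 A b m2 B d xs"
    and delta: "\<delta> > 0"
    and Lpos: "L > 0"
    and Lip: "lipschitz1 n (bip_obj n Q c) L"
    and mu: "\<mu> = measure_pmf.expectation (bern_vec n p) (\<lambda>x. dist1 n x xs)"
    and small: "\<mu> \<le> \<delta> / L"
  shows "measure_pmf.prob (bern_samples k n p)
           {X. \<exists>l<k. bip_obj n Q c (X l) \<le> bip_obj n Q c xs + \<delta>}
         \<ge> 1 - exp (real k * ((\<delta> / L) * (1 - ln (\<delta> / (\<mu> * L))) - \<mu>))"
proof -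
  define f where "f = bip_obj n Q c"
  define t where "t = \<delta> / L"
  define ex where "ex = t * (1 - ln (\<delta> / (\<mu> * L))) - \<mu>"
  define F where "F = {x. \<not> f x \<le> f xs + \<delta>}"
  define M where "M = bern_vec n p"
  have tpos: "0 < t" unfolding t_def using delta Lpos by simp
  have mu0: "0 \<le> \<mu>" using mu mu_sum[OF p01, of xs] p01
    by (auto intro!: sum_nonneg simp: qi_def)
  have FD: "F \<subseteq> {x. dist1 n x xs \<ge> t}"
  proof
    fix x assume "x \<in> F"
    then have "f x > f xs + \<delta>" unfolding F_def by simp
    moreover have "f x - f xs \<le> L * dist1 n x xs"
      using Lip unfolding lipschitz1_def f_def by (metis abs_le_D1)
    ultimately have "\<delta> < L * dist1 n x xs" by simp
    then have "t < dist1 n x xs" unfolding t_def using Lpos by (simp add: pos_divide_less_eq mult.commute)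
    then show "x \<in> {x. dist1 n x xs \<ge> t}" by simp
  qed
  have hF: "measure_pmf.prob M F \<le> exp ex"
  proof (cases "\<mu> = 0")
    case True
    have "measure_pmf.prob M F \<le> measure_pmf.prob M {x. dist1 n x xs \<ge> t}"
      by (rule measure_pmf.finite_measure_mono[OF FD]) simp
    also have "\<dots> \<le> measure_pmf.expectation M (\<lambda>x. dist1 n x xs) / t"
      unfolding M_def by (rule markov_pmf) (auto intro: fin_bern tpos simp: dist1_def)
    also have "\<dots> = 0" using True mu unfolding M_def by simp
    finally show ?thesis using exp_gt_zero[of ex] by linarith
  next
    case False
    then have mupos: "0 < \<mu>" using mu0 by simp
    have eq: "\<delta> / (\<mu> * L) = t / \<mu>" unfolding t_def using mupos Lpos by simp
    have "measure_pmf.prob M F \<le> measure_pmf.prob M {x. dist1 n x xs \<ge> t}"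
      by (rule measure_pmf.finite_measure_mono[OF FD]) simp
    also have "\<dots> \<le> exp (t * (1 - ln (t / \<mu>)) - \<mu>)"
      unfolding M_def by (rule chernoff[OF p01 mu mupos]) (use small t_def in simp)
    finally show ?thesis unfolding ex_def eq .
  qed
  have set_eq: "{X. \<exists>l<k. f (X l) \<le> f xs + \<delta>} = UNIV - Pi {..<k} (\<lambda>_. F)"
    unfolding F_def by auto
  have "measure_pmf.prob (bern_samples k n p) (Pi {..<k} (\<lambda>_. F)) = (\<Prod>l\<in>{..<k}. measure_pmf.prob M F)"
    unfolding bern_samples_def M_def by (rule measure_Pi_pmf_Pi) simp
  also have "\<dots> = (measure_pmf.prob M F) ^ k" by simp
  also have "\<dots> \<le> (exp ex) ^ k"
    by (rule power_mono[OF hF]) simp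
  also have "\<dots> = exp (real k * ex)" by (simp add: exp_of_nat_mult)
  finally have P: "measure_pmf.prob (bern_samples k n p) (Pi {..<k} (\<lambda>_. F)) \<le> exp (real k * ex)" .
  have "measure_pmf.prob (bern_samples k n p) {X. \<exists>l<k. f (X l) \<le> f xs + \<delta>}
      = 1 - measure_pmf.prob (bern_samples k n p) (Pi {..<k} (\<lambda>_. F))"
    unfolding set_eq using measure_pmf.prob_compl[of "Pi {..<k} (\<lambda>_. F)" "bern_samples k n p"] by simp
  with P show ?thesis unfolding f_def ex_def t_def by linarith
qed

end
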